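(* Let $\mathbf P_N(z)=\begin{pmatrix}P_N(z)& C(w_NP_N)(z)\\ h_{N-1}^{-1}P_{N-1}(z)& h_{N-1}^{-1}C(w_NP_{N-1})(z)\end{pmatrix}$, $\Pi(z)=\frac{\sin(N\pi z)}{N\pi}$, and for $|\Im z|<\epsilon_0$ define \[ \mathbf D^u_\pm(z)=\begin{pmatrix}1&-\frac{w_N(z)}{\Pi(z)}e^{\pm iN\pi z}\\0&1\end{pmatrix},\qquad \mathbf D^l_\pm(z)=\begin{pmatrix}\Pi(z)^{-1}&0\\-\frac{1}{w_N(z)}e^{\pm iN\pi z}&\Pi(z)\end{pmatrix}, \] and $\mathbf R^u_N(z)=\mathbf P_N(z)\mathbf D^u_+(z)$, $\mathbf R^l_N(z)=\mathbf P_N(z)\mathbf D^l_+(z)$ for $\Im z\ge0$, and $\mathbf R^u_N(z)=\mathbf P_N(z)\mathbf D^u_-(z)$, $\mathbf R^l_N(z)=\mathbf P_N(z)\mathbf D^l_-(z)$ for $\Im z\le0$ (two-valued on $\mathbb R$). Then $\mathbf R^u_N$ and $\mathbf R^l_N$ have no poles (all apparent singularities at points of $L_N$ are removable, on each of the closed upper and lower half-strips), and for $x\in\mathbb R$, with $+$ / $-$ denoting the values from the upper / lower half-plane, \[ \mathbf R^u_{N+}(x)=\mathbf R^u_{N-}(x)\begin{pmatrix}1&-2N\pi i\,w_N(x)\\0&1\end{pmatrix},\qquad \mathbf R^l_{N+}(x)=\mathbf R^l_{N-}(x)\begin{pmatrix}1&0\\-\frac{2N\pi i}{w_N(x)}&1\end{pmatrix}.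 \]
   Context: Let $V$ be a real-valued real analytic function on $\mathbb R$ with an analytic extension to the strip $\{|\Im z|<\epsilon_0\}$, $\epsilon_0>0$, satisfying $\Re V(z)/\log(|z|^2+1)\to+\infty$ as $|z|\to\infty$ in the strip. Fix $N\in\mathbb N$, let $L_N=\{k/N:k\in\mathbb Z\}$ and $w_N(z)=e^{-NV(z)}$. Let $P_n$ be the monic polynomials of degree $n$ with $\sum_{x\in L_N}P_m(x)P_n(x)w_N(x)=h_n\delta_{mn}$. For a function $f$ on $L_N$, $C(f)(z)=\sum_{x\in L_N}\frac{f(x)}{z-x}$. *)

theory Defs
  imports "HOL-Analysis.Analysis" "HOL-Computational_Algebra.Polynomial"
begin

definition mat2 :: "'a \<Rightarrow> 'a \<Rightarrow> 'a \<Rightarrow> 'a \<Rightarrow> 'a^2^2" where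
  "mat2 a b c d = (\<chi> i j. if i = 1 then (if j = 1 then a else b) else (if j = 1 then c else d))"

definition strip :: "real \<Rightarrow> complex set" where
  "strip e = {z. \<bar>Im z\<bar> < e}"

definition latN :: "nat \<Rightarrow> complex set" where
  "latN N = {of_int k / of_nat N | k. True}"

definition cpoly :: "real poly \<Rightarrow> complex poly" where
  "cpoly p = map_poly of_real p"

definition wN :: "nat \<Rightarrow> (complex \<Rightarrow> complex) \<Rightarrow> complex \<Rightarrow> complex" where
  "wN N V z = exp (- of_nat N * V z)"

definition cauchy_tr :: "nat \<Rightarrow> (complex \<Rightarrow> complex) \<Rightarrow> complex \<Rightarrow> complex" where
  "cauchy_tr N f z = (\<Sum>\<^sub>\<infinity>x\<in>latN N. f x / (z - x))"

definition PiN :: "nat \<Rightarrow> complex \<Rightarrow> complex" where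
  "PiN N z = sin (of_nat N * of_real pi * z) / (of_nat N * of_real pi)"

definition bigP :: "nat \<Rightarrow> (complex \<Rightarrow> complex) \<Rightarrow> (nat \<Rightarrow> real poly) \<Rightarrow> (nat \<Rightarrow> real)
    \<Rightarrow> complex \<Rightarrow> complex^2^2" where
  "bigP N V P h z = mat2
     (poly (cpoly (P N)) z)
     (cauchy_tr N (\<lambda>x. wN N V x * poly (cpoly (P N)) x) z)
     (poly (cpoly (P (N - 1))) z / of_real (h (N - 1)))
     (cauchy_tr N (\<lambda>x. wN N V x * poly (cpoly (P (N - 1))) x) z / of_real (h (N - 1)))"

text \<open>D^u_sigma and D^l_sigma, sigma = 1 for +, sigma = -1 for -.\<close>
definition Du :: "nat \<Rightarrow> (complex \<Rightarrow> complex) \<Rightarrow> real \<Rightarrow> complex \<Rightarrow> complex^2^2" where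
  "Du N V \<sigma> z = mat2 1
     (- (wN N V z / PiN N z) * exp (of_real \<sigma> * \<i> * of_nat N * of_real pi * z)) 0 1"

definition Dl :: "nat \<Rightarrow> (complex \<Rightarrow> complex) \<Rightarrow> real \<Rightarrow> complex \<Rightarrow> complex^2^2" where
  "Dl N V \<sigma> z = mat2 (1 / PiN N z) 0
     (- (1 / wN N V z) * exp (of_real \<sigma> * \<i> * of_nat N * of_real pi * z)) (PiN N z)"

definition mat_holomorphic_on :: "(complex \<Rightarrow> complex^2^2) \<Rightarrow> complex set \<Rightarrow> bool" where
  "mat_holomorphic_on F S = (\<forall>i j. (\<lambda>z. F z $ i $ j) holomorphic_on S)"

end

theory Submission
  imports Defs "HOL-Complex_Analysis.Complex_Analysis"
begin
no_notation fps_nth (infixl \<open>$\<close> 75)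



lemma mat2_nth: "mat2 a b c d $ i $ j =
   (if i = 1 then (if j = 1 then a else b) else (if j = 1 then c else d))"
  by (simp add: mat2_def)

lemma mat2_mult: "mat2 a b c d ** mat2 a' b' c' d' =
   mat2 (a*a' + b*c') (a*b' + b*d') (c*a' + d*c') (c*b' + d*d')"
  unfolding vec_eq_iff forall_2 by (simp add: mat2_nth matrix_matrix_mult_def sum_2)

lemma mat2_eta: "(A :: 'a^2^2) = mat2 (A$1$1) (A$1$2) (A$2$1) (A$2$2)"
  unfolding vec_eq_iff forall_2 by (simp add: mat2_nth)

lemma mat2_entry_cases:
  "(\<lambda>w. mat2 (A w) (B w) (C w) (D w) $ i $ j) \<in> {A, B, C, D}"
proof -
  have "i = 1 \<or> i = 2" "j = 1 \<or> j = 2" by (rule exhaust_2)+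
  thus ?thesis by (elim disjE) (simp_all add: mat2_nth)
qed
lemma poly_holo[holomorphic_intros]: "(\<lambda>z. poly p z :: complex) holomorphic_on S"
  unfolding holomorphic_on_def field_differentiable_def
  using poly_DERIV by (metis has_field_derivative_at_within)

lemma CT_holo:
  fixes c :: "complex \<Rightarrow> complex"
  assumes sm: "(\<lambda>x. norm (c x)) summable_on A" and d: "d > 0"
    and far: "\<And>x w. x \<in> A \<Longrightarrow> w \<in> cball z0 r \<Longrightarrow> d \<le> cmod (w - x)"
  shows "(\<lambda>w. \<Sum>\<^sub>\<infinity>x\<in>A. c x / (w - x)) holomorphic_on ball z0 r"
proof -
  have ul: "uniform_limit (cball z0 r) (\<lambda>X w. \<Sum>x\<in>X. c x / (w - x))
      (\<lambda>w. \<Sum>\<^sub>\<infinity>x\<in>A. c x / (w - x)) (finite_subsets_at_top A)"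
  proof (rule Weierstrass_m_test_general[where M = "\<lambda>x. norm (c x) / d"])
    fix x w assume x: "x \<in> A" and w: "w \<in> cball z0 r"
    have "d \<le> cmod (w - x)" using far[OF x w] .
    then show "norm (c x / (w - x)) \<le> norm (c x) / d"
      using d by (simp add: norm_divide frac_le)
  next
    show "(\<lambda>x. norm (c x) / d) summable_on A"
      using summable_on_cmult_left[OF sm, of "1/d"] by simp
  qed
  have ev: "\<forall>\<^sub>F X in finite_subsets_at_top A.
      continuous_on (cball z0 r) (\<lambda>w. \<Sum>x\<in>X. c x / (w - x)) \<and>
      (\<lambda>w. \<Sum>x\<in>X. c x / (w - x)) holomorphic_on ball z0 r"
  proof (rule eventually_finite_subsets_at_top_weakI)
    fix X assume X: "finite X" "X \<subseteq> A"
    have nz: "w - x \<noteq> 0" if "x \<in> X" "w \<in> cball z0 r" for x w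
      using far[of x w] that X d by auto
    show "continuous_on (cball z0 r) (\<lambda>w. \<Sum>x\<in>X. c x / (w - x)) \<and>
      (\<lambda>w. \<Sum>x\<in>X. c x / (w - x)) holomorphic_on ball z0 r"
    proof
      show "continuous_on (cball z0 r) (\<lambda>w. \<Sum>x\<in>X. c x / (w - x))"
        by (intro continuous_on_sum continuous_on_divide continuous_on_const continuous_on_diff
            continuous_on_id) (use nz in auto)
      show "(\<lambda>w. \<Sum>x\<in>X. c x / (w - x)) holomorphic_on ball z0 r"
        by (intro holomorphic_on_sum holomorphic_on_divide holomorphic_on_const holomorphic_on_diff
            holomorphic_on_id) (use nz in auto)
    qed
  qed
  have F: "\<not> trivial_limit (finite_subsets_at_top A)" using finite_subsets_at_top_neq_bot by simp
  show ?thesis by (rule holomorphic_uniform_limit[OF ev ul F])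
qed





lemma latN_iff: "x \<in> latN N \<longleftrightarrow> (\<exists>k::int. x = of_int k / of_nat N)"
  by (auto simp: latN_def)

lemma lat_Im: "x \<in> latN N \<Longrightarrow> Im x = 0"
  by (auto simp: latN_def)

lemma lat_sep:
  assumes N: "N \<ge> 1" and x: "x \<in> latN N" and y: "y \<in> latN N" and xy: "x \<noteq> y"
  shows "1 / real N \<le> cmod (x - y)"
proof -
  obtain j k :: int where j: "x = of_int j / of_nat N" and k: "y = of_int k / of_nat N"
    using x y by (auto simp: latN_def)
  have "j \<noteq> k" using xy j k by auto
  hence "1 \<le> \<bar>real_of_int j - real_of_int k\<bar>" by linarith
  moreover have "x - y = of_real ((real_of_int j - real_of_int k) / real N)"
    using j k by (simp add: diff_divide_distrib)
  ultimately show ?thesis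
    using N by (simp add: norm_divide divide_right_mono del: of_real_diff)
qed

lemma lat_near:
  assumes N: "N \<ge> 1"
  shows "\<exists>x0\<in>latN N. \<forall>x\<in>latN N - {x0}. \<forall>w\<in>cball z0 (1 / (4 * real N)).
            1 / (4 * real N) \<le> cmod (w - x)"
proof -
  define t where "t = real N * Re z0"
  define k where "k = round t"
  have Npos: "real N > 0" using N by simp
  have mem: "of_int k / of_nat N \<in> latN N" by (auto simp: latN_def)
  have key: "1 / (4 * real N) \<le> cmod (w - x)"
    if x: "x \<in> latN N - {of_int k / of_nat N}" and w: "w \<in> cball z0 (1 / (4 * real N))" for x w
  proof -
    obtain j :: int where j: "x = of_int j / of_nat N" using x by (auto simp: latN_def)
    have "j \<noteq> k" using x j by auto
    have r1: "\<bar>t - of_int k\<bar> \<le> \<bar>t - of_int j\<bar>" unfolding k_def by (rule round_diff_minimal)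
    have "1 \<le> \<bar>real_of_int j - real_of_int k\<bar>" using \<open>j \<noteq> k\<close> by linarith
    hence r2: "1/2 \<le> \<bar>t - of_int j\<bar>" using r1 by linarith
    have "Re z0 - of_int j / real N = (t - of_int j) / real N"
      using Npos unfolding t_def by (simp add: field_simps)
    hence "\<bar>Re z0 - of_int j / real N\<bar> = \<bar>t - of_int j\<bar> / real N"
      using Npos by simp
    also have "\<dots> \<ge> (1/2) / real N" using r2 Npos by (intro divide_right_mono) auto
    finally have r3: "1 / (2 * real N) \<le> \<bar>Re z0 - of_int j / real N\<bar>" by simp
    have "\<bar>Re w - Re z0\<bar> \<le> cmod (w - z0)" using abs_Re_le_cmod[of "w - z0"] by simp
    also have "\<dots> \<le> 1 / (4 * real N)" using w by (simp add: dist_norm norm_minus_commute)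
    finally have r4: "\<bar>Re w - Re z0\<bar> \<le> 1 / (4 * real N)" .
    have "Re (w - x) = Re w - of_int j / real N" using j by simp
    hence "\<bar>Re w - of_int j / real N\<bar> \<le> cmod (w - x)" using abs_Re_le_cmod[of "w - x"] by simp
    moreover have "1 / (2 * real N) = 1 / (4 * real N) + 1 / (4 * real N)" by simp
    ultimately show ?thesis using r3 r4 by linarith
  qed
  show ?thesis
    by (rule bexI[OF _ mem]) (use key in blast)
qed

lemma PiN_zero_iff:
  assumes N: "N \<ge> 1"
  shows "PiN N z = 0 \<longleftrightarrow> z \<in> latN N"
proof -
  have Npi: "of_nat N * of_real pi \<noteq> (0::complex)" using N by simp
  have "PiN N z = 0 \<longleftrightarrow> sin (of_nat N * of_real pi * z) = 0"
    using Npi by (simp add: PiN_def)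
  also have "\<dots> \<longleftrightarrow> (\<exists>n::int. of_nat N * of_real pi * z = of_real (of_int n * pi))"
    by (rule sin_eq_0)
  also have "\<dots> \<longleftrightarrow> (\<exists>n::int. z = of_int n / of_nat N)"
  proof -
    have "of_nat N * of_real pi * z = of_real (of_int n * pi) \<longleftrightarrow> z = of_int n / of_nat N" for n :: int
      using Npi pi_neq_zero by (auto simp: field_simps)
    thus ?thesis by simp
  qed
  finally show ?thesis by (simp add: latN_def)
qed





lemma P0_one:
  assumes "degree p = 0" "lead_coeff p = (1::real)"
  shows "poly (cpoly p) x = 1"
proof -
  have "p = 1" using assms by (metis degree_0_id one_pCons)
  thus ?thesis by (simp add: cpoly_def)
qed

lemma summ_wp:
  assumes monic: "\<forall>n. degree (P n) = n \<and> lead_coeff (P n) = 1"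
    and orth: "\<forall>m n. ((\<lambda>x. poly (cpoly (P m)) x * poly (cpoly (P n)) x * wN N V x)
                  has_sum of_real (if m = n then h n else 0)) (latN N)"
  shows "(\<lambda>x. norm (wN N V x * poly (cpoly (P n)) x)) summable_on latN N"
proof -
  have p0: "poly (cpoly (P 0)) x = 1" for x
    using monic P0_one by blast
  have "(\<lambda>x. poly (cpoly (P 0)) x * poly (cpoly (P 0)) x * wN N V x) summable_on latN N"
    using orth summable_on_def by blast
  hence "(\<lambda>x. wN N V x) summable_on latN N" using p0 by simp
  hence s1: "(\<lambda>x. norm (wN N V x)) summable_on latN N"
    by (rule summable_on_iff_abs_summable_on_complex[THEN iffD1])
  have "(\<lambda>x. poly (cpoly (P n)) x * poly (cpoly (P n)) x * wN N V x) summable_on latN N"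
    using orth summable_on_def by blast
  hence s2: "(\<lambda>x. norm (poly (cpoly (P n)) x * poly (cpoly (P n)) x * wN N V x)) summable_on latN N"
    by (rule summable_on_iff_abs_summable_on_complex[THEN iffD1])
  have s3: "(\<lambda>x. norm (wN N V x) + norm (poly (cpoly (P n)) x * poly (cpoly (P n)) x * wN N V x))
      summable_on latN N"
    by (rule summable_on_add[OF s1 s2])
  show ?thesis
  proof (rule summable_on_comparison_test[OF s3])
    fix x
    define a where "a = norm (poly (cpoly (P n)) x)"
    define b where "b = norm (wN N V x)"
    have a0: "0 \<le> a" by (simp add: a_def)
    have "0 \<le> (a - 1) * (a - 1)" by simp
    hence "0 \<le> a * a - 2 * a + 1" by (simp add: algebra_simps)
    hence a: "a \<le> 1 + a * a" using a0 by linarith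
    have "b * a \<le> b * (1 + a * a)" using a by (simp add: b_def mult_left_mono)
    moreover have "b * (1 + a * a) = b + a * a * b" by (simp add: algebra_simps)
    moreover have "norm (wN N V x * poly (cpoly (P n)) x) = b * a" by (simp add: a_def b_def norm_mult)
    moreover have "norm (poly (cpoly (P n)) x * poly (cpoly (P n)) x * wN N V x) = a * a * b"
      by (simp add: a_def b_def norm_mult)
    ultimately show "norm (wN N V x * poly (cpoly (P n)) x) \<le>
        norm (wN N V x) + norm (poly (cpoly (P n)) x * poly (cpoly (P n)) x * wN N V x)"
      by (simp add: b_def)
  qed simp
qed





lemma tri_far:
  fixes a b w :: complex
  assumes "R \<le> cmod (a - x)" "dist a w \<le> s"
  shows "R - s \<le> cmod (w - x)"
proof -
  have "norm (a - x) - norm (a - w) \<le> norm (w - x)" using norm_triangle_ineq2[of "a - x" "a - w"] by simp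
  moreover have "norm (a - w) \<le> s" using assms(2) by (simp add: dist_norm)
  ultimately show ?thesis using assms(1) by linarith
qed

lemma cauchy_tr_eq: "cauchy_tr N c = (\<lambda>w. \<Sum>\<^sub>\<infinity>x\<in>latN N. c x / (w - x))"
  by (simp add: fun_eq_iff cauchy_tr_def)

lemma CT_off:
  assumes N: "N \<ge> 1" and sm: "(\<lambda>x. norm (c x)) summable_on latN N" and z: "z \<notin> latN N"
  shows "cauchy_tr N c analytic_on {z}"
proof -
  obtain x0 where x0: "x0 \<in> latN N" and far: "\<forall>x\<in>latN N - {x0}. \<forall>w\<in>cball z (1/(4*real N)).
      1/(4*real N) \<le> cmod (w - x)" using lat_near[OF N] by blast
  define \<delta> where "\<delta> = min (1/(4*real N)) (cmod (z - x0))"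
  have zx: "z \<noteq> x0" using z x0 by auto
  have \<delta>: "\<delta> > 0" using N zx by (auto simp: \<delta>_def)
  have "(\<lambda>w. \<Sum>\<^sub>\<infinity>x\<in>latN N. c x / (w - x)) holomorphic_on ball z (\<delta>/2)"
  proof (rule CT_holo[OF sm, of "\<delta>/2"])
    show "\<delta>/2 > 0" using \<delta> by simp
    fix x w assume x: "x \<in> latN N" and w: "w \<in> cball z (\<delta>/2)"
    show "\<delta>/2 \<le> cmod (w - x)"
    proof (cases "x = x0")
      case True
      have "\<delta> \<le> cmod (z - x)" using True by (simp add: \<delta>_def)
      from tri_far[OF this, of w "\<delta>/2"] w show ?thesis by simp
    next
      case False
      have "\<delta> \<le> 1/(4*real N)" by (simp add: \<delta>_def)
      hence "\<delta>/2 \<le> 1/(4*real N)" using \<delta> by linarith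
      hence "w \<in> cball z (1/(4*real N))" using w by auto
      hence "1/(4*real N) \<le> cmod (w - x)" using far x False by blast
      thus ?thesis using \<open>\<delta>/2 \<le> 1/(4*real N)\<close> by linarith
    qed
  qed
  thus ?thesis unfolding cauchy_tr_eq
    using \<delta> by (intro holomorphic_on_imp_analytic_at[of _ "ball z (\<delta>/2)"]) auto
qed

lemma CT_at_far:
  assumes N: "N \<ge> 1" and x0: "x0 \<in> latN N" and x: "x \<in> latN N - {x0}"
    and w: "w \<in> cball x0 (1/(4*real N))"
  shows "1/(4*real N) \<le> cmod (w - x)"
proof -
  have "1 / real N \<le> cmod (x0 - x)" using lat_sep[OF N x0, of x] x by auto
  from tri_far[OF this, of w "1/(4*real N)"] w have "1/real N - 1/(4*real N) \<le> cmod (w - x)" by simp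
  moreover have "1/(4*real N) \<le> 1/real N - 1/(4*real N)" using N by (simp add: field_simps)
  ultimately show ?thesis by linarith
qed

lemma CT_at:
  assumes N: "N \<ge> 1" and sm: "(\<lambda>x. norm (c x)) summable_on latN N" and x0: "x0 \<in> latN N"
  shows "(\<lambda>w. \<Sum>\<^sub>\<infinity>x\<in>latN N - {x0}. c x / (w - x)) holomorphic_on ball x0 (1/(4*real N))"
    and "\<forall>w\<in>ball x0 (1/(4*real N)) - {x0}.
           cauchy_tr N c w = c x0 / (w - x0) + (\<Sum>\<^sub>\<infinity>x\<in>latN N - {x0}. c x / (w - x))"
proof -
  have d: "1/(4*real N) > 0" using N by simp
  have sm': "(\<lambda>x. norm (c x)) summable_on latN N - {x0}"
    using summable_on_subset_banach[OF sm] by blast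
  show "(\<lambda>w. \<Sum>\<^sub>\<infinity>x\<in>latN N - {x0}. c x / (w - x)) holomorphic_on ball x0 (1/(4*real N))"
    by (rule CT_holo[OF sm' d]) (use CT_at_far[OF N x0] in auto)
  show "\<forall>w\<in>ball x0 (1/(4*real N)) - {x0}.
           cauchy_tr N c w = c x0 / (w - x0) + (\<Sum>\<^sub>\<infinity>x\<in>latN N - {x0}. c x / (w - x))"
  proof
    fix w assume w: "w \<in> ball x0 (1/(4*real N)) - {x0}"
    have wc: "w \<in> cball x0 (1/(4*real N))" using w by auto
    have "(\<lambda>x. norm (c x / (w - x))) summable_on latN N - {x0}"
    proof (rule summable_on_comparison_test)
      show "(\<lambda>x. norm (c x) * (4 * real N)) summable_on latN N - {x0}"
        by (rule summable_on_cmult_left[OF sm'])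
      fix x assume x: "x \<in> latN N - {x0}"
      have f: "1/(4*real N) \<le> cmod (w - x)" by (rule CT_at_far[OF N x0 x wc])
      have pos: "0 < cmod (w - x)" using f d by linarith
      have "norm (c x) / cmod (w - x) \<le> norm (c x) / (1/(4*real N))"
        using divide_left_mono[OF f norm_ge_zero mult_pos_pos[OF pos d]] .
      thus "norm (c x / (w - x)) \<le> norm (c x) * (4 * real N)"
        by (simp add: norm_divide)
    qed simp
    hence s: "(\<lambda>x. c x / (w - x)) summable_on latN N - {x0}" by (rule abs_summable_summable)
    have "latN N = insert x0 (latN N - {x0})" using x0 by auto
    hence "cauchy_tr N c w = (\<Sum>\<^sub>\<infinity>x\<in>insert x0 (latN N - {x0}). c x / (w - x))"
      by (simp add: cauchy_tr_def)
    also have "\<dots> = c x0 / (w - x0) + (\<Sum>\<^sub>\<infinity>x\<in>latN N - {x0}. c x / (w - x))"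
      by (rule infsum_insert[OF s]) simp
    finally show "cauchy_tr N c w = c x0 / (w - x0) + (\<Sum>\<^sub>\<infinity>x\<in>latN N - {x0}. c x / (w - x))" .
  qed
qed





definition RSf :: "complex \<Rightarrow> (complex \<Rightarrow> complex) \<Rightarrow> bool" where
  "RSf x0 F \<longleftrightarrow> (\<exists>B H K. open B \<and> x0 \<in> B \<and> H holomorphic_on B \<and> K holomorphic_on B \<and>
      K x0 = 0 \<and> (\<forall>z\<in>B-{x0}. F z = H z + K z / (z - x0)))"

lemma RSf_remove:
  assumes "RSf x0 F"
  shows "remove_sings F analytic_on {x0}"
proof -
  obtain B H K where B: "open B" "x0 \<in> B" and H: "H holomorphic_on B" and K: "K holomorphic_on B"
    and K0: "K x0 = 0" and eq: "\<forall>z\<in>B-{x0}. F z = H z + K z / (z - x0)"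
    using assms unfolding RSf_def by blast
  define g where "g z = H z + (if z = x0 then deriv K x0 else (K z - K x0) / (z - x0))" for z
  have gh: "g holomorphic_on B"
    unfolding g_def
    by (intro holomorphic_on_add H pole_lemma[OF K]) (simp add: interior_open B)
  have eqg: "F z = g z" if "z \<in> B - {x0}" for z
    using eq that K0 by (auto simp: g_def)
  have "F holomorphic_on B - {x0}"
    by (rule holomorphic_transform[of g]) (use gh eqg in \<open>auto intro: holomorphic_on_subset\<close>)
  hence "F analytic_on B - {x0}"
    using B by (subst analytic_on_open) auto
  hence iso: "isolated_singularity_at F x0"
    using B isolated_singularity_at_iff_analytic_nhd by blast
  have "isCont g x0"
    using gh B holomorphic_on_imp_continuous_on continuous_on_eq_continuous_at by blast
  hence "(g \<longlongrightarrow> g x0) (at x0)" by (simp add: isCont_def)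
  moreover have "eventually (\<lambda>z. g z = F z) (at x0)"
    using eventually_at_in_open[OF B] by eventually_elim (use eqg in auto)
  ultimately have "(F \<longlongrightarrow> g x0) (at x0)" by (rule Lim_transform_eventually)
  thus ?thesis by (rule remove_sings_analytic_at[OF iso])
qed

lemma PiN_holo[holomorphic_intros]: "PiN N holomorphic_on S"
  unfolding PiN_def[abs_def] by (intro holomorphic_intros) simp

lemma PiN_deriv:
  assumes N: "N \<ge> 1"
  shows "(PiN N has_field_derivative cos (of_nat N * of_real pi * z)) (at z)"
proof -
  define c where "c = (of_nat N * of_real pi :: complex)"
  have c: "c \<noteq> 0" using N by (simp add: c_def)
  have "((\<lambda>z. sin (c * z) / c) has_field_derivative cos (c * z)) (at z)"
    using c by (auto intro!: derivative_eq_intros)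
  thus ?thesis by (simp add: PiN_def[abs_def] c_def)
qed

lemma lat_facts:
  assumes N: "N \<ge> 1" and x0: "x0 \<in> latN N"
  shows "sin (of_nat N * of_real pi * x0) = 0"
    and "cos (of_nat N * of_real pi * x0) * cos (of_nat N * of_real pi * x0) = 1"
    and "exp (of_real 1 * \<i> * of_nat N * of_real pi * x0) = cos (of_nat N * of_real pi * x0)"
    and "exp (of_real (-1) * \<i> * of_nat N * of_real pi * x0) = cos (of_nat N * of_real pi * x0)"
proof -
  define u where "u = of_nat N * of_real pi * x0"
  have "PiN N x0 = 0" using PiN_zero_iff[OF N] x0 by simp
  hence s: "sin u = 0" using N by (simp add: PiN_def u_def)
  thus "sin (of_nat N * of_real pi * x0) = 0" by (simp add: u_def)
  have "(sin u)^2 + (cos u)^2 = 1" by (rule sin_cos_squared_add)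
  thus "cos (of_nat N * of_real pi * x0) * cos (of_nat N * of_real pi * x0) = 1"
    using s by (simp add: u_def power2_eq_square)
  have "exp (\<i> * u) = cos u + \<i> * sin u" by (rule exp_Euler)
  thus "exp (of_real 1 * \<i> * of_nat N * of_real pi * x0) = cos (of_nat N * of_real pi * x0)"
    using s by (simp add: u_def mult.assoc)
  have "exp (-(\<i> * u)) = cos u - \<i> * sin u" by (rule exp_minus_Euler)
  thus "exp (of_real (-1) * \<i> * of_nat N * of_real pi * x0) = cos (of_nat N * of_real pi * x0)"
    using s by (simp add: u_def mult.assoc)
qed





lemma Q_exists:
  assumes N: "N \<ge> 1" and x0: "x0 \<in> latN N"
  shows "\<exists>Q. Q holomorphic_on ball x0 (1/(4*real N)) \<and>
     (\<forall>z\<in>ball x0 (1/(4*real N)). Q z * PiN N z = z - x0) \<and>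
     Q x0 = cos (of_nat N * of_real pi * x0)"
proof -
  define r where "r = 1/(4*real N)"
  define s where "s = cos (of_nat N * of_real pi * x0)"
  have ss: "s * s = 1" using lat_facts(2)[OF N x0] by (simp add: s_def)
  have Pi0: "PiN N x0 = 0" using PiN_zero_iff[OF N] x0 by simp
  have nz: "PiN N z \<noteq> 0" if z: "z \<in> ball x0 r" "z \<noteq> x0" for z
  proof
    assume "PiN N z = 0"
    hence "z \<in> latN N" using PiN_zero_iff[OF N] by simp
    hence "1 / real N \<le> cmod (x0 - z)" using lat_sep[OF N x0, of z] z by auto
    moreover have "cmod (x0 - z) < r" using z by (simp add: dist_norm)
    moreover have "r < 1 / real N" using N by (simp add: r_def field_simps)
    ultimately show False by linarith
  qed
  define Pd where "Pd z = (if z = x0 then deriv (PiN N) x0 else (PiN N z - PiN N x0) / (z - x0))" for z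
  have Pdh: "Pd holomorphic_on ball x0 r"
    unfolding Pd_def[abs_def] by (rule pole_lemma[OF PiN_holo]) (use N in \<open>simp add: r_def\<close>)
  have dd: "deriv (PiN N) x0 = s"
    unfolding s_def by (rule DERIV_imp_deriv[OF PiN_deriv[OF N]])
  have Pdnz: "Pd z \<noteq> 0" if "z \<in> ball x0 r" for z
  proof (cases "z = x0")
    case True thus ?thesis using dd ss by (auto simp: Pd_def)
  next
    case False thus ?thesis using nz[OF that False] Pi0 by (simp add: Pd_def)
  qed
  define Q where "Q z = 1 / Pd z" for z
  have Qh: "Q holomorphic_on ball x0 r"
    unfolding Q_def[abs_def] by (intro holomorphic_on_divide holomorphic_on_const Pdh) (use Pdnz in auto)
  have QP: "Q z * PiN N z = z - x0" if "z \<in> ball x0 r" for z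
  proof (cases "z = x0")
    case True thus ?thesis using Pi0 by simp
  next
    case False thus ?thesis using nz[OF that False] Pi0 by (simp add: Q_def Pd_def)
  qed
  have snz: "s \<noteq> 0" using ss by auto
  have "1 / s = s" using ss snz by (simp add: field_simps)
  hence "Q x0 = s" using dd by (simp add: Q_def Pd_def)
  thus ?thesis using Qh QP unfolding r_def s_def by blast
qed

lemma RSfI:
  assumes "open B" "x0 \<in> B" "H holomorphic_on B" "K holomorphic_on B" "K x0 = 0"
    "\<And>z. z \<in> B - {x0} \<Longrightarrow> F z = H z + K z / (z - x0)"
  shows "RSf x0 F"
  unfolding RSf_def using assms by blast

lemma id2: "(d::complex) \<noteq> 0 \<Longrightarrow> q \<noteq> 0 \<Longrightarrow>
   A * (-(W / (d / q)) * E) + (Gz + c0 / d) * 1 = Gz + (c0 - A * W * E * q) / d"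
  by (simp add: field_simps)

lemma id3: "(d::complex) \<noteq> 0 \<Longrightarrow> q \<noteq> 0 \<Longrightarrow> W \<noteq> 0 \<Longrightarrow>
   A * (1 / (d / q)) + (Gz + c0 / d) * (-(1 / W) * E) = - Gz * E / W + (A * q - c0 * E / W) / d"
  by (simp add: field_simps)

lemma id4: "(d::complex) \<noteq> 0 \<Longrightarrow> A * 0 + (Gz + c0 / d) * P = Gz * P + c0 * P / d"
  by (simp add: field_simps)

lemma row_RS:
  assumes B: "open B" "x0 \<in> B"
    and hol: "\<alpha> holomorphic_on B" "G holomorphic_on B" "w holomorphic_on B" "e holomorphic_on B"
       "Q holomorphic_on B" "Pf holomorphic_on B"
    and wnz: "\<forall>z\<in>B. w z \<noteq> 0"
    and QP: "\<forall>z\<in>B. Q z * Pf z = z - x0"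
    and s: "Q x0 = s" "e x0 = s" "s * s = 1"
    and Ceq: "\<forall>z\<in>B - {x0}. Cf z = G z + (w x0 * \<alpha> x0) / (z - x0)"
  shows "RSf x0 (\<lambda>z. \<alpha> z * 1 + Cf z * 0)"
    and "RSf x0 (\<lambda>z. \<alpha> z * (-(w z / Pf z) * e z) + Cf z * 1)"
    and "RSf x0 (\<lambda>z. \<alpha> z * (1 / Pf z) + Cf z * (-(1 / w z) * e z))"
    and "RSf x0 (\<lambda>z. \<alpha> z * 0 + Cf z * Pf z)"
proof -
  have Pz: "Pf z = (z - x0) / Q z" "Q z \<noteq> 0" "z - x0 \<noteq> 0" if "z \<in> B - {x0}" for z
  proof -
    have h: "Q z * Pf z = z - x0" using QP that by auto
    show d: "z - x0 \<noteq> 0" using that by auto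
    show qn: "Q z \<noteq> 0" using h d by auto
    show "Pf z = (z - x0) / Q z" using h qn by (simp add: field_simps)
  qed
  have "Q x0 * Pf x0 = 0" using QP B by auto
  moreover have "Q x0 \<noteq> 0" using s by auto
  ultimately have Pi0: "Pf x0 = 0" by simp
  have ws: "w x0 \<noteq> 0" using wnz B by auto
  show "RSf x0 (\<lambda>z. \<alpha> z * 1 + Cf z * 0)"
    by (rule RSfI[where H=\<alpha> and K="\<lambda>_. 0"]) (use B hol in auto)
  show "RSf x0 (\<lambda>z. \<alpha> z * (-(w z / Pf z) * e z) + Cf z * 1)"
  proof (rule RSfI[where B=B and H=G and K="\<lambda>z. w x0 * \<alpha> x0 - \<alpha> z * w z * e z * Q z"])
    show "(\<lambda>z. w x0 * \<alpha> x0 - \<alpha> z * w z * e z * Q z) holomorphic_on B"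
      using hol by (intro holomorphic_intros)
    show "w x0 * \<alpha> x0 - \<alpha> x0 * w x0 * e x0 * Q x0 = 0"
      using s by (simp add: algebra_simps)
    fix z assume z: "z \<in> B - {x0}"
    have c: "Cf z = G z + (w x0 * \<alpha> x0) / (z - x0)" using Ceq z by auto
    have p: "Pf z = (z - x0) / Q z" "Q z \<noteq> 0" "z - x0 \<noteq> 0" using Pz[OF z] by auto
    show "\<alpha> z * (-(w z / Pf z) * e z) + Cf z * 1 =
        G z + (w x0 * \<alpha> x0 - \<alpha> z * w z * e z * Q z) / (z - x0)"
      unfolding c p(1) by (rule id2[OF p(3) p(2)])
  qed (use B hol in auto)
  show "RSf x0 (\<lambda>z. \<alpha> z * (1 / Pf z) + Cf z * (-(1 / w z) * e z))"
  proof (rule RSfI[where B=B and H="\<lambda>z. - G z * e z / w z"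
      and K="\<lambda>z. \<alpha> z * Q z - w x0 * \<alpha> x0 * e z / w z"])
    show "(\<lambda>z. \<alpha> z * Q z - w x0 * \<alpha> x0 * e z / w z) holomorphic_on B"
      using hol wnz by (intro holomorphic_intros) auto
    show "(\<lambda>z. - G z * e z / w z) holomorphic_on B"
      using hol wnz by (intro holomorphic_intros) auto
    show "\<alpha> x0 * Q x0 - w x0 * \<alpha> x0 * e x0 / w x0 = 0"
      using s ws by simp
    fix z assume z: "z \<in> B - {x0}"
    have c: "Cf z = G z + (w x0 * \<alpha> x0) / (z - x0)" using Ceq z by auto
    have p: "Pf z = (z - x0) / Q z" "Q z \<noteq> 0" "z - x0 \<noteq> 0" using Pz[OF z] by auto
    have wz: "w z \<noteq> 0" using wnz z by auto
    show "\<alpha> z * (1 / Pf z) + Cf z * (-(1 / w z) * e z) =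
        - G z * e z / w z + (\<alpha> z * Q z - w x0 * \<alpha> x0 * e z / w z) / (z - x0)"
      unfolding c p(1) by (rule id3[OF p(3) p(2) wz])
  qed (use B in auto)
  show "RSf x0 (\<lambda>z. \<alpha> z * 0 + Cf z * Pf z)"
  proof (rule RSfI[where B=B and H="\<lambda>z. G z * Pf z" and K="\<lambda>z. w x0 * \<alpha> x0 * Pf z"])
    show "(\<lambda>z. w x0 * \<alpha> x0 * Pf z) holomorphic_on B"
      using hol by (intro holomorphic_intros)
    show "(\<lambda>z. G z * Pf z) holomorphic_on B"
      using hol by (intro holomorphic_intros)
    fix z assume z: "z \<in> B - {x0}"
    have c: "Cf z = G z + (w x0 * \<alpha> x0) / (z - x0)" using Ceq z by auto
    have p: "Pf z = (z - x0) / Q z" "Q z \<noteq> 0" "z - x0 \<noteq> 0" using Pz[OF z] by auto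
    show "\<alpha> z * 0 + Cf z * Pf z = G z * Pf z + w x0 * \<alpha> x0 * Pf z / (z - x0)"
      unfolding c by (rule id4[OF p(3)])
  qed (use B Pi0 in auto)
qed





definition RSm :: "(complex \<Rightarrow> complex^2^2) \<Rightarrow> complex \<Rightarrow> complex^2^2" where
  "RSm M z = (\<chi> i j. remove_sings (\<lambda>w. M w $ i $ j) z)"

lemma RS_props:
  assumes S: "open S"
    and a: "\<And>i j z. z \<in> S - L \<Longrightarrow> (\<lambda>w. M w $ i $ j) analytic_on {z}"
    and b: "\<And>i j z. z \<in> S \<inter> L \<Longrightarrow> RSf z (\<lambda>w. M w $ i $ j)"
  shows "mat_holomorphic_on (RSm M) S" and "\<And>z. z \<in> S - L \<Longrightarrow> RSm M z = M z"
proof -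
  show "mat_holomorphic_on (RSm M) S"
    unfolding mat_holomorphic_on_def
  proof (intro allI)
    fix i j
    have "(\<lambda>z. remove_sings (\<lambda>w. M w $ i $ j) z) analytic_on S"
    proof (rule analytic_on_analytic_at[THEN iffD2], rule ballI)
      fix z assume z: "z \<in> S"
      show "(\<lambda>z. remove_sings (\<lambda>w. M w $ i $ j) z) analytic_on {z}"
      proof (cases "z \<in> L")
        case True
        thus ?thesis using RSf_remove[OF b[of z i j]] z by blast
      next
        case False
        thus ?thesis using remove_sings_analytic_on[OF a[of z i j]] z by blast
      qed
    qed
    hence "(\<lambda>z. remove_sings (\<lambda>w. M w $ i $ j) z) holomorphic_on S"
      by (rule analytic_imp_holomorphic)
    thus "(\<lambda>z. RSm M z $ i $ j) holomorphic_on S"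
      by (simp only: RSm_def vec_lambda_beta)
  qed
  show "RSm M z = M z" if z: "z \<in> S - L" for z
    unfolding vec_eq_iff RSm_def vec_lambda_beta using remove_sings_at_analytic[OF a[OF z]] by blast
qed

lemma RS_jump:
  assumes S: "open S" and hA: "mat_holomorphic_on A S" and hB: "mat_holomorphic_on B S"
    and cC: "\<And>i j. continuous_on S (\<lambda>z. C z $ i $ j)"
    and eq: "\<And>z. z \<in> S - L \<Longrightarrow> A z = B z ** C z"
    and disc: "\<And>z. \<exists>r>0. \<forall>w\<in>ball z r - {z}. w \<notin> L"
    and z: "z \<in> S"
  shows "A z = B z ** C z"
  unfolding vec_eq_iff
proof (intro allI)
  fix i j
  define f where "f w = A w $ i $ j" for w
  define g where "g w = (\<Sum>k\<in>UNIV. B w $ i $ k * C w $ k $ j)" for w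
  have gf: "(B w ** C w) $ i $ j = g w" for w
    by (simp add: g_def matrix_matrix_mult_def)
  have "f holomorphic_on S" using hA unfolding mat_holomorphic_on_def f_def by simp
  hence "continuous_on S f" by (rule holomorphic_on_imp_continuous_on)
  hence cf: "isCont f z" using continuous_on_eq_continuous_at[OF S, of f] z by blast
  have cB: "continuous_on S (\<lambda>w. B w $ i $ k)" for k
    using hB unfolding mat_holomorphic_on_def by (simp add: holomorphic_on_imp_continuous_on)
  have "continuous_on S g"
    unfolding g_def by (intro continuous_on_sum continuous_on_mult cB cC)
  hence cg: "isCont g z" using continuous_on_eq_continuous_at[OF S, of g] z by blast
  obtain r where r: "r > 0" "\<forall>w\<in>ball z r - {z}. w \<notin> L" using disc by blast
  have op: "open (ball z r \<inter> S)" using S by auto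
  have zin: "z \<in> ball z r \<inter> S" using r z by auto
  have "eventually (\<lambda>w. g w = f w) (at z)"
    using eventually_at_in_open[OF op zin]
  proof eventually_elim
    case (elim w)
    hence "w \<in> S - L" using r by auto
    thus ?case using eq[of w] gf by (simp add: f_def)
  qed
  moreover have "(g \<longlongrightarrow> g z) (at z)" using cg by (simp add: isCont_def)
  ultimately have l2: "(f \<longlongrightarrow> g z) (at z)" by (rule Lim_transform_eventually[rotated])
  have l1: "(f \<longlongrightarrow> f z) (at z)" using cf by (simp add: isCont_def)
  have "f z = g z" by (rule tendsto_unique[OF trivial_limit_at l1 l2])
  thus "A z $ i $ j = (B z ** C z) $ i $ j" by (simp add: f_def gf)
qed

lemma lat_discrete:
  assumes N: "N \<ge> 1"
  shows "\<exists>r>0. \<forall>w\<in>ball z r - {z}. w \<notin> latN N"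
proof -
  obtain x0 where x0: "x0 \<in> latN N" and far: "\<forall>x\<in>latN N - {x0}. \<forall>w\<in>cball z (1/(4*real N)).
      1/(4*real N) \<le> cmod (w - x)" using lat_near[OF N] by blast
  define r where "r = (if z = x0 then 1/(4*real N) else min (1/(4*real N)) (cmod (z - x0)))"
  have r: "r > 0" using N by (auto simp: r_def)
  have rle: "r \<le> 1/(4*real N)" by (auto simp: r_def)
  have "w \<notin> latN N" if w: "w \<in> ball z r - {z}" for w
  proof
    assume wl: "w \<in> latN N"
    have wc: "w \<in> cball z (1/(4*real N))" using w rle by auto
    show False
    proof (cases "w = x0")
      case True
      hence "z \<noteq> x0" using w by auto
      hence "r \<le> cmod (z - x0)" by (simp add: r_def)
      moreover have "cmod (z - x0) < r" using w True by (simp add: dist_norm)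
      ultimately show False by simp
    next
      case False
      hence "1/(4*real N) \<le> cmod (w - w)" using far wl wc by blast
      thus False using N by simp
    qed
  qed
  thus ?thesis using r by blast
qed

lemma strip_open: "open (strip e)"
proof -
  have "strip e = {z. Im z < e} \<inter> {z. Im z > -e}" by (auto simp: strip_def)
  thus ?thesis by (simp add: open_halfspace_Im_lt open_halfspace_Im_gt open_Int)
qed

lemma lat_in_strip: "e > 0 \<Longrightarrow> x \<in> latN N \<Longrightarrow> x \<in> strip e"
  by (auto simp: strip_def lat_Im)

lemma entry_analytic_prod:
  assumes "\<And>i j. (\<lambda>w. A w $ i $ j) analytic_on {z}" "\<And>i j. (\<lambda>w. B w $ i $ j) analytic_on {z}"
  shows "(\<lambda>w. (A w ** B w) $ i $ j) analytic_on {z}"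
proof -
  have "(\<lambda>w. (A w ** B w) $ i $ j) = (\<lambda>w. \<Sum>k\<in>UNIV. A w $ i $ k * B w $ k $ j)"
    by (simp add: matrix_matrix_mult_def fun_eq_iff)
  moreover have "(\<lambda>w. \<Sum>k\<in>UNIV. A w $ i $ k * B w $ k $ j) analytic_on {z}"
    by (intro analytic_on_sum analytic_on_mult assms)
  ultimately show ?thesis by simp
qed

lemma entry_analytic_mat2:
  assumes "A analytic_on S" "B analytic_on S" "C analytic_on S" "D analytic_on S"
  shows "(\<lambda>w. mat2 (A w) (B w) (C w) (D w) $ i $ j) analytic_on S"
  using mat2_entry_cases[of A B C D i j] assms by auto





lemma jid1: "(n::complex) \<noteq> 0 \<Longrightarrow> pp \<noteq> 0 \<Longrightarrow> sn \<noteq> 0 \<Longrightarrow> Ep = Em + 2 * \<i> * sn \<Longrightarrow>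
  -(W / (sn / (n * pp))) * Ep = 1 * (- 2 * n * pp * \<i> * W) + (-(W / (sn / (n * pp))) * Em) * 1"
  by (simp add: field_simps)

lemma jid2: "(n::complex) \<noteq> 0 \<Longrightarrow> pp \<noteq> 0 \<Longrightarrow> Ep = Em + 2 * \<i> * sn \<Longrightarrow>
  -(1 / W) * Ep = (-(1 / W) * Em) * 1 + (sn / (n * pp)) * (- 2 * n * pp * \<i> / W)"
  by (cases "W = 0") (simp_all add: field_simps)

lemma exp_split:
  "exp (of_real 1 * \<i> * of_nat N * of_real pi * z) =
   exp (of_real (-1) * \<i> * of_nat N * of_real pi * z) + 2 * \<i> * sin (of_nat N * of_real pi * z)"
proof -
  define u where "u = of_nat N * of_real pi * z"
  have "sin u = (exp (\<i> * u) - exp (-(\<i> * u))) / (2 * \<i>)" by (rule sin_exp_eq)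
  hence e: "exp (\<i> * u) = exp (-(\<i> * u)) + 2 * \<i> * sin u" by (simp add: field_simps)
  have a1: "of_real 1 * \<i> * of_nat N * of_real pi * z = \<i> * u" by (simp add: u_def mult.assoc)
  have a2: "of_real (-1) * \<i> * of_nat N * of_real pi * z = -(\<i> * u)" by (simp add: u_def mult.assoc)
  show ?thesis unfolding a1 a2 using e unfolding u_def .
qed

lemma Du_jump:
  assumes N: "N \<ge> 1" and z: "z \<notin> latN N"
  shows "Du N V 1 z = Du N V (-1) z ** mat2 1 (- 2 * of_nat N * of_real pi * \<i> * wN N V z) 0 1"
proof -
  have Pnz: "PiN N z \<noteq> 0" using PiN_zero_iff[OF N] z by simp
  have sn: "sin (of_nat N * of_real pi * z) \<noteq> 0" using Pnz by (simp add: PiN_def)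
  have nN: "(of_nat N :: complex) \<noteq> 0" using N by simp
  have key: "-(wN N V z / PiN N z) * exp (of_real 1 * \<i> * of_nat N * of_real pi * z) =
     1 * (- 2 * of_nat N * of_real pi * \<i> * wN N V z) +
     (-(wN N V z / PiN N z) * exp (of_real (-1) * \<i> * of_nat N * of_real pi * z)) * 1"
    unfolding PiN_def by (rule jid1[OF nN _ sn exp_split]) simp
  show ?thesis unfolding Du_def mat2_mult by (subst key) simp
qed

lemma Dl_jump:
  assumes N: "N \<ge> 1"
  shows "Dl N V 1 z = Dl N V (-1) z ** mat2 1 0 (- 2 * of_nat N * of_real pi * \<i> / wN N V z) 1"
proof -
  have nN: "(of_nat N :: complex) \<noteq> 0" using N by simp
  have key: "-(1 / wN N V z) * exp (of_real 1 * \<i> * of_nat N * of_real pi * z) =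
     (-(1 / wN N V z) * exp (of_real (-1) * \<i> * of_nat N * of_real pi * z)) * 1 +
     PiN N z * (- 2 * of_nat N * of_real pi * \<i> / wN N V z)"
    unfolding PiN_def by (rule jid2[OF nN _ exp_split]) simp
  show ?thesis unfolding Dl_def mat2_mult by (subst key) simp
qed

lemma analytic_on_cdiv [analytic_intros]:
  "f analytic_on A \<Longrightarrow> (\<lambda>z. f z / (c::complex)) analytic_on A"
proof -
  assume "f analytic_on A"
  hence "(\<lambda>z. f z * inverse c) analytic_on A" by (intro analytic_intros)
  thus ?thesis by (simp add: divide_inverse)
qed

lemma holomorphic_on_cdiv' [holomorphic_intros]:
  "f holomorphic_on A \<Longrightarrow> (\<lambda>z. f z / (c::complex)) holomorphic_on A"
proof -
  assume "f holomorphic_on A"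
  hence "(\<lambda>z. f z * inverse c) holomorphic_on A" by (intro holomorphic_intros)
  thus ?thesis by (simp add: divide_inverse)
qed

lemma RSf_mat2:
  assumes "RSf x0 A" "RSf x0 B" "RSf x0 C" "RSf x0 D"
  shows "RSf x0 (\<lambda>w. mat2 (A w) (B w) (C w) (D w) $ i $ j)"
proof -
  have "(\<lambda>w. mat2 (A w) (B w) (C w) (D w) $ i $ j) \<in> {A, B, C, D}" by (rule mat2_entry_cases)
  hence "(\<lambda>w. mat2 (A w) (B w) (C w) (D w) $ i $ j) = A \<or> (\<lambda>w. mat2 (A w) (B w) (C w) (D w) $ i $ j) = B \<or>
     (\<lambda>w. mat2 (A w) (B w) (C w) (D w) $ i $ j) = C \<or> (\<lambda>w. mat2 (A w) (B w) (C w) (D w) $ i $ j) = D"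
    by blast
  thus ?thesis
  proof (elim disjE)
    assume h: "(\<lambda>w. mat2 (A w) (B w) (C w) (D w) $ i $ j) = A" show ?thesis by (subst h) (rule assms(1))
  next
    assume h: "(\<lambda>w. mat2 (A w) (B w) (C w) (D w) $ i $ j) = B" show ?thesis by (subst h) (rule assms(2))
  next
    assume h: "(\<lambda>w. mat2 (A w) (B w) (C w) (D w) $ i $ j) = C" show ?thesis by (subst h) (rule assms(3))
  next
    assume h: "(\<lambda>w. mat2 (A w) (B w) (C w) (D w) $ i $ j) = D" show ?thesis by (subst h) (rule assms(4))
  qed
qed

lemma cont_mat2:
  assumes "continuous_on S A" "continuous_on S B" "continuous_on S C" "continuous_on S D"
  shows "continuous_on S (\<lambda>w. mat2 (A w) (B w) (C w) (D w) $ i $ j)"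
proof -
  have "(\<lambda>w. mat2 (A w) (B w) (C w) (D w) $ i $ j) \<in> {A, B, C, D}" by (rule mat2_entry_cases)
  hence "(\<lambda>w. mat2 (A w) (B w) (C w) (D w) $ i $ j) = A \<or> (\<lambda>w. mat2 (A w) (B w) (C w) (D w) $ i $ j) = B \<or>
     (\<lambda>w. mat2 (A w) (B w) (C w) (D w) $ i $ j) = C \<or> (\<lambda>w. mat2 (A w) (B w) (C w) (D w) $ i $ j) = D"
    by blast
  thus ?thesis
  proof (elim disjE)
    assume h: "(\<lambda>w. mat2 (A w) (B w) (C w) (D w) $ i $ j) = A" show ?thesis by (subst h) (rule assms(1))
  next
    assume h: "(\<lambda>w. mat2 (A w) (B w) (C w) (D w) $ i $ j) = B" show ?thesis by (subst h) (rule assms(2))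
  next
    assume h: "(\<lambda>w. mat2 (A w) (B w) (C w) (D w) $ i $ j) = C" show ?thesis by (subst h) (rule assms(3))
  next
    assume h: "(\<lambda>w. mat2 (A w) (B w) (C w) (D w) $ i $ j) = D" show ?thesis by (subst h) (rule assms(4))
  qed
qed





lemma id5: "((A::complex) + X * Y / D) / Cc = A / Cc + X * (Y / Cc) / D"
  by (cases "Cc = 0"; cases "D = 0") (simp_all add: field_simps)

theorem proposition6p1:
  fixes V :: "complex \<Rightarrow> complex" and \<epsilon>0 :: real and N :: nat
    and P :: "nat \<Rightarrow> real poly" and h :: "nat \<Rightarrow> real"
  assumes eps: "\<epsilon>0 > 0"
    and V_holo: "V holomorphic_on strip \<epsilon>0"
    and V_real: "\<forall>x::real. V (of_real x) \<in> \<real>"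
    and V_growth: "filterlim (\<lambda>z. Re (V z) / ln ((cmod z)^2 + 1)) at_top
                     (inf at_infinity (principal (strip \<epsilon>0)))"
    and N_pos: "N \<ge> 1"
    and monic: "\<forall>n. degree (P n) = n \<and> lead_coeff (P n) = 1"
    and orth: "\<forall>m n. ((\<lambda>x. poly (cpoly (P m)) x * poly (cpoly (P n)) x * wN N V x)
                  has_sum of_real (if m = n then h n else 0)) (latN N)"
  shows "\<exists>Rup Rum Rlp Rlm.
     mat_holomorphic_on Rup (strip \<epsilon>0) \<and> mat_holomorphic_on Rum (strip \<epsilon>0) \<and>
     mat_holomorphic_on Rlp (strip \<epsilon>0) \<and> mat_holomorphic_on Rlm (strip \<epsilon>0) \<and>
     (\<forall>z \<in> strip \<epsilon>0 - latN N. Im z \<ge> 0 \<longrightarrow>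
        Rup z = bigP N V P h z ** Du N V 1 z \<and> Rlp z = bigP N V P h z ** Dl N V 1 z) \<and>
     (\<forall>z \<in> strip \<epsilon>0 - latN N. Im z \<le> 0 \<longrightarrow>
        Rum z = bigP N V P h z ** Du N V (-1) z \<and> Rlm z = bigP N V P h z ** Dl N V (-1) z) \<and>
     (\<forall>x::real.
        Rup (of_real x) = Rum (of_real x) **
          mat2 1 (- 2 * of_nat N * of_real pi * \<i> * wN N V (of_real x)) 0 1 \<and>
        Rlp (of_real x) = Rlm (of_real x) **
          mat2 1 0 (- 2 * of_nat N * of_real pi * \<i> / wN N V (of_real x)) 1)"
proof -
  have N: "N \<ge> 1" by (rule N_pos)
  define S where "S = strip \<epsilon>0"
  define L where "L = latN N"
  have Sopen: "open S" unfolding S_def by (rule strip_open)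
  have LS: "x \<in> S" if "x \<in> L" for x using lat_in_strip[OF eps] that by (simp add: S_def L_def)
  define p where "p z = poly (cpoly (P N)) z" for z
  define q where "q z = poly (cpoly (P (N - 1))) z" for z
  define Hh where "Hh = complex_of_real (h (N - 1))"
  define w where "w = wN N V"
  define c1 where "c1 x = w x * p x" for x
  define c2 where "c2 x = w x * q x" for x
  define C1 where "C1 = cauchy_tr N c1"
  define C2 where "C2 = cauchy_tr N c2"
  define qH where "qH z = q z / Hh" for z
  define C2H where "C2H z = C2 z / Hh" for z
  define e where "e \<sigma> z = exp (of_real \<sigma> * \<i> * of_nat N * of_real pi * z)" for \<sigma> :: real and z
  have bigP_eq: "bigP N V P h z = mat2 (p z) (C1 z) (qH z) (C2H z)" for z
    unfolding bigP_def p_def q_def Hh_def C1_def C2_def c1_def c2_def w_def qH_def C2H_def by (rule refl)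
  have Du_eq: "Du N V \<sigma> z = mat2 1 (-(w z / PiN N z) * e \<sigma> z) 0 1" for \<sigma> z
    unfolding Du_def w_def e_def by (rule refl)
  have Dl_eq: "Dl N V \<sigma> z = mat2 (1 / PiN N z) 0 (-(1 / w z) * e \<sigma> z) (PiN N z)" for \<sigma> z
    unfolding Dl_def w_def e_def by (rule refl)
  define Fu where "Fu \<sigma> z = bigP N V P h z ** Du N V \<sigma> z" for \<sigma> z
  define Fl where "Fl \<sigma> z = bigP N V P h z ** Dl N V \<sigma> z" for \<sigma> z
  have Fu_eq: "Fu \<sigma> = (\<lambda>z. mat2 (p z * 1 + C1 z * 0) (p z * (-(w z / PiN N z) * e \<sigma> z) + C1 z * 1)
     (qH z * 1 + C2H z * 0) (qH z * (-(w z / PiN N z) * e \<sigma> z) + C2H z * 1))" for \<sigma>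
    unfolding fun_eq_iff Fu_def bigP_eq Du_eq mat2_mult by simp
  have Fl_eq: "Fl \<sigma> = (\<lambda>z. mat2 (p z * (1 / PiN N z) + C1 z * (-(1 / w z) * e \<sigma> z)) (p z * 0 + C1 z * PiN N z)
     (qH z * (1 / PiN N z) + C2H z * (-(1 / w z) * e \<sigma> z)) (qH z * 0 + C2H z * PiN N z))" for \<sigma>
    unfolding fun_eq_iff Fl_def bigP_eq Dl_eq mat2_mult by simp
  have sm1: "(\<lambda>x. norm (c1 x)) summable_on latN N"
    using summ_wp[OF monic orth, of N] by (simp add: c1_def w_def p_def)
  have sm2: "(\<lambda>x. norm (c2 x)) summable_on latN N"
    using summ_wp[OF monic orth, of "N - 1"] by (simp add: c2_def w_def q_def)
  have wh: "w holomorphic_on S"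
    unfolding w_def wN_def[abs_def] S_def using V_holo by (intro holomorphic_intros)
  have wnz: "w z \<noteq> 0" for z by (simp add: w_def wN_def)
  have eh: "e \<sigma> holomorphic_on UNIV" for \<sigma>
    unfolding e_def[abs_def] by (intro holomorphic_intros)
  have Pnz: "PiN N z \<noteq> 0" if "z \<notin> L" for z using PiN_zero_iff[OF N] that by (simp add: L_def)
  have offA: "p analytic_on {z} \<and> qH analytic_on {z} \<and> C1 analytic_on {z} \<and> C2H analytic_on {z} \<and>
      w analytic_on {z} \<and> PiN N analytic_on {z} \<and> e \<sigma> analytic_on {z}" if z: "z \<in> S - L" for z \<sigma>
  proof (intro conjI)
    show "p analytic_on {z}" unfolding p_def[abs_def]
      by (rule holomorphic_on_imp_analytic_at[OF poly_holo open_UNIV]) simp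
    show "qH analytic_on {z}" unfolding qH_def[abs_def] q_def
      by (intro analytic_on_cdiv holomorphic_on_imp_analytic_at[OF poly_holo open_UNIV]) simp
    show "C1 analytic_on {z}" unfolding C1_def by (rule CT_off[OF N sm1]) (use z in \<open>simp add: L_def\<close>)
    show "C2H analytic_on {z}" unfolding C2H_def[abs_def] C2_def
      by (intro analytic_on_cdiv CT_off[OF N sm2]) (use z in \<open>simp add: L_def\<close>)
    show "w analytic_on {z}" by (rule holomorphic_on_imp_analytic_at[OF wh Sopen]) (use z in simp)
    show "PiN N analytic_on {z}" by (rule holomorphic_on_imp_analytic_at[OF PiN_holo open_UNIV]) simp
    show "e \<sigma> analytic_on {z}" by (rule holomorphic_on_imp_analytic_at[OF eh open_UNIV]) simp
  qed
  have aU: "(\<lambda>v. Fu \<sigma> v $ i $ j) analytic_on {z}" if z: "z \<in> S - L" for \<sigma> i j z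
  proof -
    note A = offA[OF z, of \<sigma>]
    have nz: "PiN N z \<noteq> 0" using Pnz z by auto
    show ?thesis unfolding Fu_eq
      by (rule entry_analytic_mat2) (use A nz wnz in \<open>auto intro!: analytic_intros\<close>)
  qed
  have aL: "(\<lambda>v. Fl \<sigma> v $ i $ j) analytic_on {z}" if z: "z \<in> S - L" for \<sigma> i j z
  proof -
    note A = offA[OF z, of \<sigma>]
    have nz: "PiN N z \<noteq> 0" using Pnz z by auto
    show ?thesis unfolding Fl_eq
      by (rule entry_analytic_mat2) (use A nz wnz in \<open>auto intro!: analytic_intros\<close>)
  qed
  have onL: "RSf x0 (\<lambda>v. Fu \<sigma> v $ i $ j) \<and> RSf x0 (\<lambda>v. Fl \<sigma> v $ i $ j)"
    if x0: "x0 \<in> L" and \<sigma>: "\<sigma> = 1 \<or> \<sigma> = -1" for x0 \<sigma> i j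
  proof -
    have x0l: "x0 \<in> latN N" using x0 by (simp add: L_def)
    define r where "r = min (1/(4*real N)) \<epsilon>0"
    define B where "B = ball x0 r"
    have r: "r > 0" using N eps by (simp add: r_def)
    have Bo: "open B" "x0 \<in> B" using r by (auto simp: B_def)
    have B1: "B \<subseteq> ball x0 (1/(4*real N))" by (auto simp: B_def r_def)
    have BS: "B \<subseteq> S"
    proof
      fix z assume z: "z \<in> B"
      have "\<bar>Im (z - x0)\<bar> \<le> cmod (z - x0)" by (rule abs_Im_le_cmod)
      moreover have "cmod (z - x0) < r" using z by (simp add: B_def dist_norm norm_minus_commute)
      moreover have "r \<le> \<epsilon>0" by (simp add: r_def)
      moreover have "Im x0 = 0" by (rule lat_Im[OF x0l])
      ultimately show "z \<in> S" by (simp add: S_def strip_def)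
    qed
    obtain Q where Qh: "Q holomorphic_on ball x0 (1/(4*real N))"
      and QP: "\<forall>z\<in>ball x0 (1/(4*real N)). Q z * PiN N z = z - x0"
      and Qs: "Q x0 = cos (of_nat N * of_real pi * x0)"
      using Q_exists[OF N x0l] by blast
    define s where "s = cos (of_nat N * of_real pi * x0)"
    have ss: "s * s = 1" using lat_facts(2)[OF N x0l] by (simp add: s_def)
    have es: "e \<sigma> x0 = s" using \<sigma> lat_facts(3,4)[OF N x0l] by (auto simp: e_def s_def)
    define G1 where "G1 = (\<lambda>v. \<Sum>\<^sub>\<infinity>x\<in>latN N - {x0}. c1 x / (v - x))"
    define G2 where "G2 = (\<lambda>v. \<Sum>\<^sub>\<infinity>x\<in>latN N - {x0}. c2 x / (v - x))"
    have G1h: "G1 holomorphic_on B"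
      using holomorphic_on_subset[OF CT_at(1)[OF N sm1 x0l] B1] by (simp add: G1_def)
    have G2h: "(\<lambda>z. G2 z / Hh) holomorphic_on B"
      using holomorphic_on_subset[OF CT_at(1)[OF N sm2 x0l] B1]
      by (intro holomorphic_on_cdiv') (simp add: G2_def)
    have C1eq: "\<forall>z\<in>B - {x0}. C1 z = G1 z + (w x0 * p x0) / (z - x0)"
    proof
      fix z assume z: "z \<in> B - {x0}"
      hence "z \<in> ball x0 (1/(4*real N)) - {x0}" using B1 by auto
      hence "cauchy_tr N c1 z = c1 x0 / (z - x0) + G1 z"
        using CT_at(2)[OF N sm1 x0l] unfolding G1_def by blast
      thus "C1 z = G1 z + (w x0 * p x0) / (z - x0)"
        unfolding C1_def by (simp add: c1_def add.commute)
    qed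
    have C2eq: "\<forall>z\<in>B - {x0}. C2H z = G2 z / Hh + (w x0 * qH x0) / (z - x0)"
    proof
      fix z assume z: "z \<in> B - {x0}"
      hence "z \<in> ball x0 (1/(4*real N)) - {x0}" using B1 by auto
      hence "cauchy_tr N c2 z = c2 x0 / (z - x0) + G2 z"
        using CT_at(2)[OF N sm2 x0l] unfolding G2_def by blast
      hence "C2 z = G2 z + (w x0 * q x0) / (z - x0)"
        unfolding C2_def by (simp add: c2_def add.commute)
      thus "C2H z = G2 z / Hh + (w x0 * qH x0) / (z - x0)"
        unfolding C2H_def qH_def by (simp add: id5)
    qed
    have wB: "w holomorphic_on B" using holomorphic_on_subset[OF wh BS] .
    have eB: "e \<sigma> holomorphic_on B" using holomorphic_on_subset[OF eh] by blast
    have pB: "p holomorphic_on B" unfolding p_def[abs_def] by (rule poly_holo)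
    have qB: "qH holomorphic_on B" unfolding qH_def[abs_def] q_def by (intro holomorphic_on_cdiv' poly_holo)
    have QB: "Q holomorphic_on B" using holomorphic_on_subset[OF Qh B1] .
    have PiB: "PiN N holomorphic_on B" by (rule PiN_holo)
    have wnzB: "\<forall>z\<in>B. w z \<noteq> 0" using wnz by blast
    have QPB: "\<forall>z\<in>B. Q z * PiN N z = z - x0" using QP B1 by blast
    have Qs': "Q x0 = s" using Qs by (simp add: s_def)
    note R1 = row_RS[OF Bo pB G1h wB eB QB PiB wnzB QPB Qs' es ss C1eq]
    note R2 = row_RS[OF Bo qB G2h wB eB QB PiB wnzB QPB Qs' es ss C2eq]
    show ?thesis
    proof
      show "RSf x0 (\<lambda>v. Fu \<sigma> v $ i $ j)"
        unfolding Fu_eq by (rule RSf_mat2[OF R1(1) R1(2) R2(1) R2(2)])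
      show "RSf x0 (\<lambda>v. Fl \<sigma> v $ i $ j)"
        unfolding Fl_eq by (rule RSf_mat2[OF R1(3) R1(4) R2(3) R2(4)])
    qed
  qed
  have bU: "RSf z (\<lambda>v. Fu \<sigma> v $ i $ j)" "RSf z (\<lambda>v. Fl \<sigma> v $ i $ j)"
    if "z \<in> S \<inter> L" "\<sigma> = 1 \<or> \<sigma> = -1" for z \<sigma> i j
    using onL[of z \<sigma> i j] that by auto
  have PU: "mat_holomorphic_on (RSm (Fu \<sigma>)) S" "\<And>z. z \<in> S - L \<Longrightarrow> RSm (Fu \<sigma>) z = Fu \<sigma> z"
    if "\<sigma> = 1 \<or> \<sigma> = -1" for \<sigma>
    using RS_props[OF Sopen aU bU(1)] that by blast+
  have PL: "mat_holomorphic_on (RSm (Fl \<sigma>)) S" "\<And>z. z \<in> S - L \<Longrightarrow> RSm (Fl \<sigma>) z = Fl \<sigma> z"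
    if "\<sigma> = 1 \<or> \<sigma> = -1" for \<sigma>
    using RS_props[OF Sopen aL bU(2)] that by blast+
  have disc: "\<And>z. \<exists>r>0. \<forall>v\<in>ball z r - {z}. v \<notin> L"
    unfolding L_def by (rule lat_discrete[OF N])
  have wc: "continuous_on S (wN N V)" using holomorphic_on_imp_continuous_on[OF wh] by (simp add: w_def)
  have jU: "RSm (Fu 1) z = RSm (Fu (-1)) z ** mat2 1 (- 2 * of_nat N * of_real pi * \<i> * wN N V z) 0 1"
    if z: "z \<in> S" for z
  proof (rule RS_jump[OF Sopen PU(1) PU(1) _ _ disc z])
    show "continuous_on S (\<lambda>z. mat2 1 (- 2 * of_nat N * of_real pi * \<i> * wN N V z) 0 1 $ i $ j)" for i j
      by (intro cont_mat2 continuous_on_const continuous_on_mult wc)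
    fix v assume v: "v \<in> S - L"
    have "Fu 1 v = bigP N V P h v ** (Du N V (-1) v ** mat2 1 (- 2 * of_nat N * of_real pi * \<i> * wN N V v) 0 1)"
      unfolding Fu_def using Du_jump[OF N, of v V] v by (simp add: L_def)
    also have "\<dots> = Fu (-1) v ** mat2 1 (- 2 * of_nat N * of_real pi * \<i> * wN N V v) 0 1"
      by (simp add: Fu_def matrix_mul_assoc)
    finally show "RSm (Fu 1) v = RSm (Fu (-1)) v ** mat2 1 (- 2 * of_nat N * of_real pi * \<i> * wN N V v) 0 1"
      using PU(2)[of 1 v] PU(2)[of "-1" v] v by simp
  qed simp_all
  have jL: "RSm (Fl 1) z = RSm (Fl (-1)) z ** mat2 1 0 (- 2 * of_nat N * of_real pi * \<i> / wN N V z) 1"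
    if z: "z \<in> S" for z
  proof (rule RS_jump[OF Sopen PL(1) PL(1) _ _ disc z])
    show "continuous_on S (\<lambda>z. mat2 1 0 (- 2 * of_nat N * of_real pi * \<i> / wN N V z) 1 $ i $ j)" for i j
      by (intro cont_mat2 continuous_on_const continuous_on_divide wc) (use wnz in \<open>simp add: w_def\<close>)
    fix v assume v: "v \<in> S - L"
    have "Fl 1 v = bigP N V P h v ** (Dl N V (-1) v ** mat2 1 0 (- 2 * of_nat N * of_real pi * \<i> / wN N V v) 1)"
      unfolding Fl_def using Dl_jump[OF N, of V v] by simp
    also have "\<dots> = Fl (-1) v ** mat2 1 0 (- 2 * of_nat N * of_real pi * \<i> / wN N V v) 1"
      by (simp add: Fl_def matrix_mul_assoc)
    finally show "RSm (Fl 1) v = RSm (Fl (-1)) v ** mat2 1 0 (- 2 * of_nat N * of_real pi * \<i> / wN N V v) 1"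
      using PL(2)[of 1 v] PL(2)[of "-1" v] v by simp
  qed simp_all
  have xS: "complex_of_real x \<in> S" for x using eps by (simp add: S_def strip_def)
  show ?thesis
  proof (intro exI conjI)
    show "mat_holomorphic_on (RSm (Fu 1)) (strip \<epsilon>0)" using PU(1)[of 1] by (simp add: S_def)
    show "mat_holomorphic_on (RSm (Fu (-1))) (strip \<epsilon>0)" using PU(1)[of "-1"] by (simp add: S_def)
    show "mat_holomorphic_on (RSm (Fl 1)) (strip \<epsilon>0)" using PL(1)[of 1] by (simp add: S_def)
    show "mat_holomorphic_on (RSm (Fl (-1))) (strip \<epsilon>0)" using PL(1)[of "-1"] by (simp add: S_def)
    show "\<forall>z\<in>strip \<epsilon>0 - latN N. 0 \<le> Im z \<longrightarrow>
        RSm (Fu 1) z = bigP N V P h z ** Du N V 1 z \<and> RSm (Fl 1) z = bigP N V P h z ** Dl N V 1 z"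
      using PU(2)[of 1] PL(2)[of 1] by (simp add: S_def L_def Fu_def Fl_def)
    show "\<forall>z\<in>strip \<epsilon>0 - latN N. Im z \<le> 0 \<longrightarrow>
        RSm (Fu (-1)) z = bigP N V P h z ** Du N V (-1) z \<and> RSm (Fl (-1)) z = bigP N V P h z ** Dl N V (-1) z"
      using PU(2)[of "-1"] PL(2)[of "-1"] by (simp add: S_def L_def Fu_def Fl_def)
    show "\<forall>x::real. RSm (Fu 1) (of_real x) = RSm (Fu (-1)) (of_real x) **
          mat2 1 (- 2 * of_nat N * of_real pi * \<i> * wN N V (of_real x)) 0 1 \<and>
        RSm (Fl 1) (of_real x) = RSm (Fl (-1)) (of_real x) **
          mat2 1 0 (- 2 * of_nat N * of_real pi * \<i> / wN N V (of_real x)) 1"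
      using jU[OF xS] jL[OF xS] by blast
  qed
qed

end
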